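(* Let $\mathcal{E}_{\mathrm{MUB}}$ be the minimal Clifford measurement ensemble described in the context, fix $U\in\mathcal{E}_{\mathrm{MUB}}$, and write $|\Phi_{U,\mathbf{b}}\rangle=U^{\dagger}|\mathbf{b}\rangle$. Let $O$ be a Hermitian observable with $O_{\mathbf{b},\mathbf{b}'}=\langle\Phi_{U,\mathbf{b}}|O|\Phi_{U,\mathbf{b}'}\rangle$, and let $O_F=\sum_{\mathbf{b}\ne\mathbf{b}'}O_{\mathbf{b},\mathbf{b}'}|\Phi_{U,\mathbf{b}}\rangle\langle\Phi_{U,\mathbf{b}'}|$ be its off-diagonal part in this basis. Then for every state $\rho$, the estimator $\widehat{O}_F=\operatorname{tr}(O_F\hat\rho)$ obtained from one snapshot of MCM shadow estimation with ensemble $\mathcal{E}_{\mathrm{MUB}}$ satisfies $$\mathrm{Var}_{\mathcal{E}_{\mathrm{MUB}}}(\widehat{O}_F)\le\frac{2^n+1}{2^n}\,C_{l_1}(O)^2,\qquad C_{l_1}(O):=\sum_{\mathbf{b}\ne\mathbf{b}'}|O_{\mathbf{b},\mathbf{b}'}|.$$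
   Context: Galois arithmetic: fix an irreducible polynomial $P_n(x)$ of degree $n$ over $\mathrm{GF}(2)$; integers $a=\sum_i a_i2^i\in\{0,\dots,2^n-1\}$ are identified with polynomials $\sum_ia_ix^i$ and row vectors $(a_0,\dots,a_{n-1})$, and $a\odot b=a(x)b(x)\bmod P_n(x)$. Let $\Gamma_{k,j}$ be the coefficient of $x^j$ in $x^k\bmod P_n$, and $M_n^{(0)}$ the $n\times n$ binary matrix with entries $\Gamma_{p+q,0}$. For $v\in\{0,\dots,2^n-1\}$ let $\alpha_{v,i,j}$ be the $j$-th entry of $(v\odot 2^i)M_n^{(0)}$ mod 2 and $g_i^{(v)}=\sqrt{-1}^{\,\alpha_{v,i,i}}X_i\prod_jZ_j^{\alpha_{v,i,j}}$ ($X_i,Z_i$ Paulis on qubit $i$). $\mathcal{E}_{\mathrm{MUB}}=\{\mathbb{I}\}\cup\{U_v\}_{v=0}^{2^n-1}$, where $U_v$ is a Clifford unitary with $U_v^{\dagger}Z_iU_v=\pm g_i^{(v)}$ for all $i$; these $2^n+1$ computational-basis-rotated bases form a complete set of mutually unbiased bases. MCM shadow estimation: pick $U'\in\mathcal{E}_{\mathrm{MUB}}$ uniformly, measure in the computational basis getting $\mathbf{b}$ with probability $\langle\mathbf{b}|U'\rho U'^{\dagger}|\mathbf{b}\rangle$, and set $\hat\rho=(2^n+1)U'^{\dagger}|\mathbf{b}\rangle\langle\mathbf{b}|U'-\mathbb{I}$. The variance is over $U'$ and $\mathbf{b}$. *)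

theory Defs
  imports "Berlekamp_Zassenhaus.Finite_Field" "HOL-Computational_Algebra.Polynomial"
          "Jordan_Normal_Form.Matrix"
begin

type_synonym gf2 = "bool mod_ring"

definition nat_to_poly :: "nat \<Rightarrow> nat \<Rightarrow> gf2 poly" where
  "nat_to_poly n a = (\<Sum>i<n. monom (if bit a i then 1 else 0) i)"

text \<open>Galois product a \<odot> b = a(x) b(x) mod P(x), as a polynomial (row vector of coefficients).\<close>
definition gf_mult :: "nat \<Rightarrow> gf2 poly \<Rightarrow> nat \<Rightarrow> nat \<Rightarrow> gf2 poly" where
  "gf_mult n P a b = (nat_to_poly n a * nat_to_poly n b) mod P"

definition Gamma :: "gf2 poly \<Rightarrow> nat \<Rightarrow> nat \<Rightarrow> gf2" where
  "Gamma P k j = coeff (monom 1 k mod P) j"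

definition M0 :: "gf2 poly \<Rightarrow> nat \<Rightarrow> nat \<Rightarrow> gf2" where
  "M0 P p q = Gamma P (p + q) 0"

text \<open>alpha v i j: j-th entry of the row vector (v \<odot> 2^i) M0, computed in GF(2) (i.e. mod 2).\<close>
definition alpha :: "nat \<Rightarrow> gf2 poly \<Rightarrow> nat \<Rightarrow> nat \<Rightarrow> nat \<Rightarrow> nat" where
  "alpha n P v i j = (if (\<Sum>p<n. coeff (gf_mult n P v (2 ^ i)) p * M0 P p j) = 0 then 0 else 1)"

section \<open>Qubit operators on (C^2)^{\<otimes> n}, basis |b\<rangle>, b < 2^n, bit i of b = qubit i\<close>

definition adj :: "complex mat \<Rightarrow> complex mat" where
  "adj A = mat (dim_col A) (dim_row A) (\<lambda>(i, j). cnj (A $$ (j, i)))"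

definition mtrace :: "complex mat \<Rightarrow> complex" where
  "mtrace A = (\<Sum>i<dim_row A. A $$ (i, i))"

definition ket :: "nat \<Rightarrow> nat \<Rightarrow> complex vec" where
  "ket n b = unit_vec (2 ^ n) b"

definition couter :: "complex vec \<Rightarrow> complex vec \<Rightarrow> complex mat" where
  "couter x y = mat (dim_vec x) (dim_vec y) (\<lambda>(r, s). x $ r * cnj (y $ s))"

definition cinner :: "complex vec \<Rightarrow> complex vec \<Rightarrow> complex" where
  "cinner x y = (\<Sum>k<dim_vec x. cnj (x $ k) * y $ k)"

definition Xq :: "nat \<Rightarrow> nat \<Rightarrow> complex mat" where
  "Xq n i = mat (2 ^ n) (2 ^ n) (\<lambda>(r, s). if r = Bit_Operations.xor s (2 ^ i) then 1 else 0)"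

definition Zq :: "nat \<Rightarrow> nat \<Rightarrow> complex mat" where
  "Zq n i = mat (2 ^ n) (2 ^ n) (\<lambda>(r, s). if r = s then (if bit s i then -1 else 1) else 0)"

definition mprod :: "nat \<Rightarrow> complex mat list \<Rightarrow> complex mat" where
  "mprod N Ms = foldr (*) Ms (1\<^sub>m N)"

definition gen_g :: "nat \<Rightarrow> gf2 poly \<Rightarrow> nat \<Rightarrow> nat \<Rightarrow> complex mat" where
  "gen_g n P v i = (\<i> ^ alpha n P v i i) \<cdot>\<^sub>m
     (Xq n i * mprod (2 ^ n) (map (\<lambda>j. Zq n j ^\<^sub>m alpha n P v i j) [0..<n]))"

definition is_unitary :: "nat \<Rightarrow> complex mat \<Rightarrow> bool" where
  "is_unitary n U \<longleftrightarrow> U \<in> carrier_mat (2 ^ n) (2 ^ n) \<and>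
     adj U * U = 1\<^sub>m (2 ^ n) \<and> U * adj U = 1\<^sub>m (2 ^ n)"

definition is_pauli :: "nat \<Rightarrow> complex mat \<Rightarrow> bool" where
  "is_pauli n M \<longleftrightarrow> (\<exists>ph (a::nat) (c::nat). ph \<in> {1, -1, \<i>, -\<i>} \<and> a < 2 ^ n \<and> c < 2 ^ n \<and>
     M = ph \<cdot>\<^sub>m (mprod (2 ^ n) (map (\<lambda>j. if bit a j then Xq n j else 1\<^sub>m (2 ^ n)) [0..<n]) *
                  mprod (2 ^ n) (map (\<lambda>j. if bit c j then Zq n j else 1\<^sub>m (2 ^ n)) [0..<n])))"

definition clifford :: "nat \<Rightarrow> complex mat \<Rightarrow> bool" where
  "clifford n U \<longleftrightarrow> is_unitary n U \<and>
     (\<forall>i<n. is_pauli n (U * Xq n i * adj U) \<and> is_pauli n (U * Zq n i * adj U))"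

definition mub_unitary :: "nat \<Rightarrow> gf2 poly \<Rightarrow> nat \<Rightarrow> complex mat \<Rightarrow> bool" where
  "mub_unitary n P v U \<longleftrightarrow> clifford n U \<and>
     (\<forall>i<n. adj U * Zq n i * U = gen_g n P v i \<or> adj U * Zq n i * U = - gen_g n P v i)"

text \<open>The ensemble E_MUB = {I} \<union> {U_v}: index None gives the identity, Some v gives U_v.
  Uniform sampling is over the 2^n+1 indices.\<close>
definition ens_index :: "nat \<Rightarrow> nat option set" where
  "ens_index n = insert None (Some ` {..<2 ^ n})"

definition ens :: "nat \<Rightarrow> (nat \<Rightarrow> complex mat) \<Rightarrow> nat option \<Rightarrow> complex mat" where
  "ens n U k = (case k of None \<Rightarrow> 1\<^sub>m (2 ^ n) | Some v \<Rightarrow> U v)"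

definition is_hermitian :: "nat \<Rightarrow> complex mat \<Rightarrow> bool" where
  "is_hermitian n A \<longleftrightarrow> A \<in> carrier_mat (2 ^ n) (2 ^ n) \<and> adj A = A"

definition is_density :: "nat \<Rightarrow> complex mat \<Rightarrow> bool" where
  "is_density n \<rho> \<longleftrightarrow> is_hermitian n \<rho> \<and> mtrace \<rho> = 1 \<and>
     (\<forall>x \<in> carrier_vec (2 ^ n). 0 \<le> Re (cinner x (\<rho> *\<^sub>v x)))"

definition phi :: "nat \<Rightarrow> complex mat \<Rightarrow> nat \<Rightarrow> complex vec" where
  "phi n U b = adj U *\<^sub>v ket n b"

definition Oel :: "nat \<Rightarrow> complex mat \<Rightarrow> complex mat \<Rightarrow> nat \<Rightarrow> nat \<Rightarrow> complex" where
  "Oel n U Ob b b' = cinner (phi n U b) (Ob *\<^sub>v phi n U b')"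

definition O_F :: "nat \<Rightarrow> complex mat \<Rightarrow> complex mat \<Rightarrow> complex mat" where
  "O_F n U Ob = mat (2 ^ n) (2 ^ n) (\<lambda>(r, s).
     \<Sum>b<2 ^ n. \<Sum>b'<2 ^ n. if b \<noteq> b' then
        Oel n U Ob b b' * (phi n U b) $ r * cnj ((phi n U b') $ s) else 0)"

definition C_l1 :: "nat \<Rightarrow> complex mat \<Rightarrow> complex mat \<Rightarrow> real" where
  "C_l1 n U Ob = (\<Sum>b<2 ^ n. \<Sum>b'<2 ^ n. if b \<noteq> b' then cmod (Oel n U Ob b b') else 0)"

definition shadow_prob :: "nat \<Rightarrow> complex mat \<Rightarrow> complex mat \<Rightarrow> nat \<Rightarrow> real" where
  "shadow_prob n \<rho> U' b = (1 / (2 ^ n + 1)) * Re ((U' * \<rho> * adj U') $$ (b, b))"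

definition snapshot :: "nat \<Rightarrow> complex mat \<Rightarrow> nat \<Rightarrow> complex mat" where
  "snapshot n U' b = (of_nat (2 ^ n + 1) \<cdot>\<^sub>m (adj U' * couter (ket n b) (ket n b) * U')) - 1\<^sub>m (2 ^ n)"

text \<open>Estimator tr(A rho_hat) (real, since A and rho_hat are Hermitian).\<close>
definition estimator :: "nat \<Rightarrow> complex mat \<Rightarrow> complex mat \<Rightarrow> nat \<Rightarrow> real" where
  "estimator n A U' b = Re (mtrace (A * snapshot n U' b))"

definition shadow_var :: "nat \<Rightarrow> (nat \<Rightarrow> complex mat) \<Rightarrow> complex mat \<Rightarrow> complex mat \<Rightarrow> real" where
  "shadow_var n U \<rho> A =
    (\<Sum>k\<in>ens_index n. \<Sum>b<2 ^ n. shadow_prob n \<rho> (ens n U k) b * (estimator n A (ens n U k) b)\<^sup>2)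
    - (\<Sum>k\<in>ens_index n. \<Sum>b<2 ^ n. shadow_prob n \<rho> (ens n U k) b * estimator n A (ens n U k) b)\<^sup>2"

end

theory Submission
  imports Defs "HOL-Computational_Algebra.Polynomial_Factorial"
begin


lemma adj_carrier[simp]: "A \<in> carrier_mat m k \<Longrightarrow> adj A \<in> carrier_mat k m"
  by (auto simp: adj_def)
lemma adj_dim[simp]: "dim_row (adj A) = dim_col A" "dim_col (adj A) = dim_row A"
  by (auto simp: adj_def)
lemma adj_index[simp]: "i < dim_col A \<Longrightarrow> j < dim_row A \<Longrightarrow> adj A $$ (i, j) = cnj (A $$ (j, i))"
  by (auto simp: adj_def)

lemma mult_index_sum:
  assumes "A \<in> carrier_mat m k" "B \<in> carrier_mat k l" "i < m" "j < l"
  shows "(A * B) $$ (i, j) = (\<Sum>t<k. A $$ (i, t) * B $$ (t, j))"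
  using assms by (auto simp: scalar_prod_def atLeast0LessThan intro!: sum.cong)

lemma mult_index_sum':
  "i < dim_row A \<Longrightarrow> j < dim_col B \<Longrightarrow> dim_col A = dim_row B \<Longrightarrow>
   (A * B) $$ (i, j) = (\<Sum>t<dim_row B. A $$ (i, t) * B $$ (t, j))"
  by (auto simp: scalar_prod_def atLeast0LessThan intro!: sum.cong)

lemma adj_mult:
  assumes "A \<in> carrier_mat m k" "B \<in> carrier_mat k l"
  shows "adj (A * B) = adj B * adj A"
proof (rule eq_matI)
  fix i j assume "i < dim_row (adj B * adj A)" "j < dim_col (adj B * adj A)"
  then have ij: "i < l" "j < m" using assms by auto
  have "adj (A * B) $$ (i, j) = cnj ((A * B) $$ (j, i))" using ij assms by simp
  also have "\<dots> = (\<Sum>t<k. cnj (A $$ (j, t)) * cnj (B $$ (t, i)))"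
    using ij assms by (simp del: index_mult_mat add: mult_index_sum[where k=k])
  also have "\<dots> = (adj B * adj A) $$ (i, j)"
    using ij assms by (simp del: index_mult_mat add: mult_index_sum' mult.commute)
  finally show "adj (A * B) $$ (i, j) = (adj B * adj A) $$ (i, j)" .
qed (use assms in auto)

lemma adj_adj[simp]: "adj (adj A) = A"
  by (rule eq_matI) auto

lemma adj_smult: "adj (c \<cdot>\<^sub>m A) = cnj c \<cdot>\<^sub>m adj A"
  by (rule eq_matI) auto

lemma adj_one[simp]: "adj (1\<^sub>m N) = 1\<^sub>m N"
  by (rule eq_matI) auto

lemma unitary_carrier: "is_unitary n V \<Longrightarrow> V \<in> carrier_mat (2^n) (2^n)"
  by (simp add: is_unitary_def)

lemma unitary_cols:
  assumes "is_unitary n V" "k < 2^n" "l < 2^n"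
  shows "(\<Sum>a<2^n. cnj (V $$ (a, k)) * V $$ (a, l)) = (if k = l then 1 else 0)"
proof -
  have V: "V \<in> carrier_mat (2^n) (2^n)" using assms by (simp add: is_unitary_def)
  have "(adj V * V) $$ (k, l) = (if k = l then 1 else 0)"
    using assms by (simp add: is_unitary_def)
  then show ?thesis using V assms by (simp del: index_mult_mat add: mult_index_sum')
qed

lemma unitary_rows:
  assumes "is_unitary n V" "k < 2^n" "l < 2^n"
  shows "(\<Sum>a<2^n. V $$ (k, a) * cnj (V $$ (l, a))) = (if k = l then 1 else 0)"
proof -
  have V: "V \<in> carrier_mat (2^n) (2^n)" using assms by (simp add: is_unitary_def)
  have "(V * adj V) $$ (k, l) = (if k = l then 1 else 0)"
    using assms by (simp add: is_unitary_def)
  then show ?thesis using V assms by (simp del: index_mult_mat add: mult_index_sum')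
qed

section \<open>Pauli monomials\<close>

definition sg :: "nat set \<Rightarrow> nat \<Rightarrow> complex" where
  "sg C s = (\<Prod>l\<in>C. if bit s l then -1 else 1)"

definition PZ :: "nat \<Rightarrow> nat \<Rightarrow> nat set \<Rightarrow> complex mat" where
  "PZ n a C = mat (2^n) (2^n) (\<lambda>(r, s). if r = xor s a then sg C s else 0)"

lemma PZ_carrier[simp]: "PZ n a C \<in> carrier_mat (2^n) (2^n)"
  by (simp add: PZ_def)

lemma PZ_dim[simp]: "dim_row (PZ n a C) = 2^n" "dim_col (PZ n a C) = 2^n"
  by (auto simp: PZ_def)

lemma PZ_index: "r < 2^n \<Longrightarrow> s < 2^n \<Longrightarrow> PZ n a C $$ (r, s) = (if r = xor s a then sg C s else 0)"
  by (simp add: PZ_def)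

lemma sg_xor: "sg C (xor s a) = sg C s * sg C a"
  unfolding sg_def
  by (cases "finite C") (auto simp: prod.distrib[symmetric] bit_xor_iff intro!: prod.cong)

lemma sg_sq: "sg C a * sg C a = 1"
  unfolding sg_def
  by (cases "finite C") (auto simp: prod.distrib[symmetric] intro!: prod.neutral)

lemma sg_pm: "sg C a = 1 \<or> sg C a = -1"
proof -
  have "(sg C a)^2 = 1" using sg_sq[of C a] by (simp add: power2_eq_square)
  then show ?thesis using power2_eq_1_iff by blast
qed

lemma sg_zero[simp]: "sg C 0 = 1"
  by (simp add: sg_def)

lemma sg_pow2: "finite C \<Longrightarrow> sg C (2^i) = (if i \<in> C then -1 else 1)"
  unfolding sg_def by (simp add: bit_exp_iff prod.delta)

lemma sg_single: "sg {j} s = (if bit s j then -1 else 1)"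
  by (simp add: sg_def)

lemma xor_lt: "(s::nat) < 2^n \<Longrightarrow> a < 2^n \<Longrightarrow> xor s a < 2^n"
  by (metis take_bit_nat_eq_self take_bit_xor take_bit_nat_less_exp)

lemma bit_lt: "(v::nat) < 2^n \<Longrightarrow> bit v k \<Longrightarrow> k < n"
  by (metis bit_take_bit_iff take_bit_nat_eq_self)

lemma bits_eq: "(s::nat) < 2^n \<Longrightarrow> t < 2^n \<Longrightarrow> (\<forall>j<n. bit s j = bit t j) \<Longrightarrow> s = t"
  by (metis bit_eq_iff bit_lt)

lemma PZ_mult_index:
  assumes "r < 2^n" "s < 2^n" "a < 2^n" "a' < 2^n"
  shows "(PZ n a C * PZ n a' C') $$ (r, s) =
     (if r = xor (xor s a') a then sg C (xor s a') * sg C' s else 0)"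
proof -
  have "(PZ n a C * PZ n a' C') $$ (r, s) =
     (\<Sum>t<2^n. PZ n a C $$ (r, t) * PZ n a' C' $$ (t, s))"
    using assms by (simp del: index_mult_mat add: mult_index_sum')
  also have "\<dots> = (\<Sum>t<2^n. (if t = xor s a' then (if r = xor t a then sg C t * sg C' s else 0) else 0))"
    using assms by (intro sum.cong refl) (auto simp: PZ_index)
  also have "\<dots> = (if r = xor (xor s a') a then sg C (xor s a') * sg C' s else 0)"
    using assms xor_lt[of s n a'] by (simp add: sum.delta)
  finally show ?thesis .
qed

lemma PZ_comm:
  assumes "a < 2^n" "a' < 2^n"
  shows "PZ n a C * PZ n a' C' = (sg C a' * sg C' a) \<cdot>\<^sub>m (PZ n a' C' * PZ n a C)"
proof (rule eq_matI)
  fix r s assume rs: "r < dim_row ((sg C a' * sg C' a) \<cdot>\<^sub>m (PZ n a' C' * PZ n a C))"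
    "s < dim_col ((sg C a' * sg C' a) \<cdot>\<^sub>m (PZ n a' C' * PZ n a C))"
  then have r: "r < 2^n" and s: "s < 2^n" by auto
  have x: "xor (xor s a) a' = xor (xor s a') a" by (simp add: ac_simps)
  have e: "sg C (xor s a') * sg C' s = sg C a' * sg C' a * (sg C' (xor s a) * sg C s)"
    by (simp add: sg_xor) (metis (no_types, lifting) mult.assoc mult.left_commute mult_1 sg_sq)
  show "(PZ n a C * PZ n a' C') $$ (r, s) = ((sg C a' * sg C' a) \<cdot>\<^sub>m (PZ n a' C' * PZ n a C)) $$ (r, s)"
    using r s assms xor_lt[OF xor_lt[OF s assms(2)] assms(1)]
    by (simp del: index_mult_mat add: index_mult_mat(2,3) PZ_mult_index x e)
qed auto

lemma Zq_PZ: "Zq n j = PZ n 0 {j}"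
  by (rule eq_matI) (auto simp: Zq_def PZ_def sg_single)

lemma Xq_PZ: "Xq n i = PZ n (2^i) {}"
  by (rule eq_matI) (auto simp: Xq_def PZ_def sg_def)



lemma Zq_carrier[simp]: "Zq n j \<in> carrier_mat (2^n) (2^n)"
  by (simp add: Zq_def)
lemma Zq_dim[simp]: "dim_row (Zq n j) = 2^n" "dim_col (Zq n j) = 2^n"
  by (auto simp: Zq_def)

lemma Zq_sq: "Zq n j * Zq n j = 1\<^sub>m (2^n)"
proof (rule eq_matI)
  fix r s assume "r < dim_row (1\<^sub>m (2 ^ n) :: complex mat)" "s < dim_col (1\<^sub>m (2 ^ n) :: complex mat)"
  then have rs: "r < 2^n" "s < 2^n" by auto
  show "(Zq n j * Zq n j) $$ (r, s) = 1\<^sub>m (2 ^ n) $$ (r, s)"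
    unfolding Zq_PZ using rs
    by (simp del: index_mult_mat add: PZ_mult_index sg_sq)
qed auto

lemma Zq_sq2: "X \<in> carrier_mat (2^n) (2^n) \<Longrightarrow> Zq n j * (Zq n j * X) = X"
  by (simp add: assoc_mult_mat[symmetric, of "Zq n j" "2^n" "2^n" "Zq n j" "2^n" X "2^n"] Zq_sq)

lemma adj_Zq: "adj (Zq n j) = Zq n j"
  by (rule eq_matI) (auto simp: Zq_def)

lemma Zq_index: "t < 2^n \<Longrightarrow> u < 2^n \<Longrightarrow> Zq n j $$ (t, u) = (if t = u then (if bit u j then -1 else 1) else 0)"
  by (simp add: Zq_def)

lemma Zq_left_index: "t < 2^n \<Longrightarrow> m < 2^n \<Longrightarrow> A \<in> carrier_mat (2^n) (2^n) \<Longrightarrow>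
  (Zq n j * A) $$ (t, m) = (if bit t j then -1 else 1) * A $$ (t, m)"
proof -
  assume a: "t < 2^n" "m < 2^n" "A \<in> carrier_mat (2^n) (2^n)"
  have "(Zq n j * A) $$ (t, m) = (\<Sum>u<2^n. Zq n j $$ (t, u) * A $$ (u, m))"
    using a by (simp del: index_mult_mat add: mult_index_sum')
  also have "\<dots> = (\<Sum>u<2^n. if t = u then (if bit u j then -1 else 1) * A $$ (u, m) else 0)"
    using a by (intro sum.cong refl) (simp add: Zq_index)
  also have "\<dots> = (if bit t j then -1 else 1) * A $$ (t, m)" using a by simp
  finally show ?thesis .
qed

lemma Zq_right_index: "t < 2^n \<Longrightarrow> m < 2^n \<Longrightarrow> A \<in> carrier_mat (2^n) (2^n) \<Longrightarrow>
  (A * Zq n j) $$ (t, m) = A $$ (t, m) * (if bit m j then -1 else 1)"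
proof -
  assume a: "t < 2^n" "m < 2^n" "A \<in> carrier_mat (2^n) (2^n)"
  have "(A * Zq n j) $$ (t, m) = (\<Sum>u<2^n. A $$ (t, u) * Zq n j $$ (u, m))"
    using a by (simp del: index_mult_mat add: mult_index_sum')
  also have "\<dots> = (\<Sum>u<2^n. if u = m then A $$ (t, u) * (if bit m j then -1 else 1) else 0)"
    using a by (intro sum.cong refl) (simp add: Zq_index)
  also have "\<dots> = A $$ (t, m) * (if bit m j then -1 else 1)" using a by simp
  finally show ?thesis .
qed

lemma assoc_n: "(A::complex mat) \<in> carrier_mat (2^n) (2^n) \<Longrightarrow> B \<in> carrier_mat (2^n) (2^n) \<Longrightarrow> C \<in> carrier_mat (2^n) (2^n)
  \<Longrightarrow> A * B * C = A * (B * C)"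
  by (rule assoc_mult_mat) auto

lemma mult_n: "(A::complex mat) \<in> carrier_mat (2^n) (2^n) \<Longrightarrow> B \<in> carrier_mat (2^n) (2^n) \<Longrightarrow> A * B \<in> carrier_mat (2^n) (2^n)"
  by (rule mult_carrier_mat) auto

lemma right_one_n: "(A::complex mat) \<in> carrier_mat (2^n) (2^n) \<Longrightarrow> A * 1\<^sub>m (2^n) = A"
  by (rule right_mult_one_mat)

lemma adj_mult_n: "A \<in> carrier_mat (2^n) (2^n) \<Longrightarrow> B \<in> carrier_mat (2^n) (2^n) \<Longrightarrow> adj (A * B) = adj B * adj A"
  by (rule adj_mult) auto

lemma smult_l_n: "(A::complex mat) \<in> carrier_mat (2^n) (2^n) \<Longrightarrow> B \<in> carrier_mat (2^n) (2^n) \<Longrightarrow> (c \<cdot>\<^sub>m A) * B = c \<cdot>\<^sub>m (A * B)"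
  by (rule mult_smult_assoc_mat)

lemma smult_r_n: "(A::complex mat) \<in> carrier_mat (2^n) (2^n) \<Longrightarrow> B \<in> carrier_mat (2^n) (2^n) \<Longrightarrow> A * (c \<cdot>\<^sub>m B) = c \<cdot>\<^sub>m (A * B)"
  by (rule mult_smult_distrib)

lemma smult_smult: "a \<cdot>\<^sub>m (b \<cdot>\<^sub>m (A::complex mat)) = (a * b) \<cdot>\<^sub>m A"
  by (rule eq_matI) auto

lemma smult_carrier_n: "A \<in> carrier_mat (2^n) (2^n) \<Longrightarrow> c \<cdot>\<^sub>m A \<in> carrier_mat (2^n) (2^n)"
  by simp

lemma adj_n: "A \<in> carrier_mat (2^n) (2^n) \<Longrightarrow> adj A \<in> carrier_mat (2^n) (2^n)"
  by simp

lemma unitary_simps: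
  assumes "is_unitary n V" "X \<in> carrier_mat (2^n) (2^n)"
  shows "adj V * (V * X) = X" "V * (adj V * X) = X"
proof -
  have V: "V \<in> carrier_mat (2^n) (2^n)" using assms by (simp add: is_unitary_def)
  have "adj V * (V * X) = (adj V * V) * X" using V assms by (simp add: assoc_n[where n=n])
  then show "adj V * (V * X) = X" using assms by (simp add: is_unitary_def)
  have "V * (adj V * X) = (V * adj V) * X" using V assms by (simp add: assoc_n[where n=n])
  then show "V * (adj V * X) = X" using assms by (simp add: is_unitary_def)
qed

lemma sg_prod_pm: "(\<Prod>i\<in>S. sg (f i) (g i) * sg (f' i) (g' i)) = 1 \<or> (\<Prod>i\<in>S. sg (f i) (g i) * sg (f' i) (g' i)) = -1"
proof -
  have "(\<Prod>i\<in>S. sg (f i) (g i) * sg (f' i) (g' i))^2 = 1"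
  proof -
    have "\<And>i. (sg (f i) (g i) * sg (f' i) (g' i)) * (sg (f i) (g i) * sg (f' i) (g' i)) = 1"
      by (metis mult.assoc mult.left_commute mult_1_right sg_sq)
    then show ?thesis by (simp add: power2_eq_square prod.distrib[symmetric])
  qed
  then show ?thesis using power2_eq_1_iff by blast
qed

lemma step_matrix:
  fixes V V' :: "complex mat"
  assumes uV: "is_unitary n V" and uV': "is_unitary n V'"
   and hV: "adj V * Zq n j * V = \<omega> \<cdot>\<^sub>m PZ n a C"
   and hV': "adj V' * Zq n i * V' = \<omega>' \<cdot>\<^sub>m PZ n a' C'"
   and ha: "a < 2^n" and ha': "a' < 2^n"
  defines "A \<equiv> V * (adj V' * Zq n i * V') * adj V"
  shows "A * (V * adj V') = (V * adj V') * Zq n i"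
    and "Zq n j * A = (sg C a' * sg C' a) \<cdot>\<^sub>m (A * Zq n j)"
    and "adj A * A = 1\<^sub>m (2^n)"
    and "A \<in> carrier_mat (2^n) (2^n)"
proof -
  let ?d = "2^n::nat"
  have V: "V \<in> carrier_mat ?d ?d" and V': "V' \<in> carrier_mat ?d ?d"
    using uV uV' by (auto simp: is_unitary_def)
  have VV: "adj V * V = 1\<^sub>m ?d" "V * adj V = 1\<^sub>m ?d" "adj V' * V' = 1\<^sub>m ?d" "V' * adj V' = 1\<^sub>m ?d"
    using uV uV' by (auto simp: is_unitary_def)
  note c = V V' adj_carrier[OF V] adj_carrier[OF V'] Zq_carrier assoc_n[where n=n] mult_n[where n=n] adj_n[where n=n] right_one_n[where n=n] VV
  show Ac: "A \<in> carrier_mat ?d ?d" unfolding A_def by (simp add: c)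
  show "A * (V * adj V') = (V * adj V') * Zq n i"
    unfolding A_def by (simp add: c unitary_simps[OF uV] unitary_simps[OF uV'])
  show "adj A * A = 1\<^sub>m ?d"
  proof -
    have h: "adj (adj V' * Zq n i * V') = adj V' * Zq n i * V'"
      using adj_mult_n[of "adj V' * Zq n i" n V'] adj_mult_n[of "adj V'" n "Zq n i"]
      by (simp add: c adj_Zq)
    have "adj A = adj (adj V) * adj (V * (adj V' * Zq n i * V'))"
      unfolding A_def by (rule adj_mult_n[where n=n]) (simp_all add: c)
    also have "\<dots> = V * (adj (adj V' * Zq n i * V') * adj V)"
      using adj_mult_n[of V n "adj V' * Zq n i * V'"] by (simp add: c)
    finally have "adj A = V * (adj V' * Zq n i * V') * adj V" using h by (simp add: c)
    then show ?thesis unfolding A_def by (simp add: c unitary_simps[OF uV] unitary_simps[OF uV'] Zq_sq2)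
  qed
  show "Zq n j * A = (sg C a' * sg C' a) \<cdot>\<^sub>m (A * Zq n j)"
  proof -
    let ?h = "adj V' * Zq n i * V'" and ?h' = "adj V * Zq n j * V"
    have hc: "?h \<in> carrier_mat ?d ?d" "?h' \<in> carrier_mat ?d ?d" using c by auto
    have comm: "?h' * ?h = (sg C a' * sg C' a) \<cdot>\<^sub>m (?h * ?h')"
      unfolding hV hV' using PZ_comm[OF ha ha', of C C']
      by (simp add: smult_l_n[where n=n] smult_r_n[where n=n] smult_smult ac_simps)
    have e1: "Zq n j * V = V * ?h'" by (simp add: c unitary_simps[OF uV])
    have e2: "?h' * adj V = adj V * Zq n j" by (simp add: c unitary_simps[OF uV] VV)
    have "Zq n j * A = (Zq n j * V) * ?h * adj V" unfolding A_def by (simp add: c)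
    also have "\<dots> = V * (?h' * ?h) * adj V" unfolding e1 by (simp add: c hc)
    also have "\<dots> = V * ((sg C a' * sg C' a) \<cdot>\<^sub>m (?h * ?h')) * adj V" unfolding comm ..
    also have "\<dots> = (sg C a' * sg C' a) \<cdot>\<^sub>m (V * ?h * (?h' * adj V))"
      by (simp add: c hc smult_l_n[where n=n] smult_r_n[where n=n] smult_carrier_n[where n=n])
    also have "\<dots> = (sg C a' * sg C' a) \<cdot>\<^sub>m (A * Zq n j)"
      unfolding e2 A_def by (simp add: c hc)
    finally show ?thesis .
  qed
qed



lemma cnj_mult_self: "cnj z * z = complex_of_real ((cmod z)^2)"
  by (metis complex_norm_square mult.commute of_real_power)

lemma pm_cases: "(x::complex) = 1 \<or> x = -1 \<Longrightarrow> y = 1 \<or> y = -1 \<Longrightarrow> (x * y = -1) = ((x = -1) \<noteq> (y = -1))"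
  by auto

lemma mub_core:
  fixes V V' :: "complex mat" and a a' :: "nat \<Rightarrow> nat" and C C' :: "nat \<Rightarrow> nat set"
  assumes uV: "is_unitary n V" and uV': "is_unitary n V'"
   and hV: "\<forall>j<n. \<exists>\<omega>. adj V * Zq n j * V = \<omega> \<cdot>\<^sub>m PZ n (a j) (C j)"
   and hV': "\<forall>i<n. \<exists>\<omega>. adj V' * Zq n i * V' = \<omega> \<cdot>\<^sub>m PZ n (a' i) (C' i)"
   and ha: "\<forall>j<n. a j < 2^n" and ha': "\<forall>i<n. a' i < 2^n"
   and nd: "\<forall>S\<subseteq>{..<n}. S \<noteq> {} \<longrightarrow> (\<exists>j<n. (\<Prod>i\<in>S. sg (C j) (a' i) * sg (C' i) (a j)) = -1)"
   and x: "x < 2^n" and b: "b < 2^n"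
  shows "(cmod ((V * adj V') $$ (b, x)))^2 = 1 / 2^n"
proof -
  let ?d = "2^n::nat"
  define \<epsilon> where "\<epsilon> i j = sg (C j) (a' i) * sg (C' i) (a j)" for i j
  define G where "G = V * adj V'"
  define g where "g t = G $$ (t, x)" for t
  have V: "V \<in> carrier_mat ?d ?d" and V': "V' \<in> carrier_mat ?d ?d"
    using uV uV' by (auto simp: is_unitary_def)
  have VV: "adj V * V = 1\<^sub>m ?d" "V * adj V = 1\<^sub>m ?d" "adj V' * V' = 1\<^sub>m ?d" "V' * adj V' = 1\<^sub>m ?d"
    using uV uV' by (auto simp: is_unitary_def)
  have Gc: "G \<in> carrier_mat ?d ?d" unfolding G_def using V V' by auto
  have eps_pm: "\<epsilon> i j = 1 \<or> \<epsilon> i j = -1" for i j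
    unfolding \<epsilon>_def using sg_pm[of "C j" "a' i"] sg_pm[of "C' i" "a j"] by auto
  have prod_pm: "(\<Prod>i\<in>X. \<epsilon> i j) = 1 \<or> (\<Prod>i\<in>X. \<epsilon> i j) = -1" for X j
    unfolding \<epsilon>_def by (rule sg_prod_pm)
  have nd': "\<forall>S\<subseteq>{..<n}. S \<noteq> {} \<longrightarrow> (\<exists>j<n. (\<Prod>i\<in>S. \<epsilon> i j) = -1)"
    using nd unfolding \<epsilon>_def by blast
  have step: "\<exists>t<?d. (\<forall>j<n. bit t j = (bit m j \<noteq> (\<epsilon> i j = -1))) \<and> cmod (g t) = cmod (g m)"
    if i: "i < n" and m: "m < ?d" for i m
  proof -
    obtain \<omega>' where hi: "adj V' * Zq n i * V' = \<omega>' \<cdot>\<^sub>m PZ n (a' i) (C' i)" using hV' i by blast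
    define A where "A = V * (adj V' * Zq n i * V') * adj V"
    obtain \<omega>0 where h0: "adj V * Zq n 0 * V = \<omega>0 \<cdot>\<^sub>m PZ n (a 0) (C 0)"
      using hV i by (metis gr_zeroI not_less0)
    have n0: "0 < n" using i by simp
    have A1: "A * G = G * Zq n i"
      using step_matrix(1)[OF uV uV' h0 hi] ha n0 ha' i unfolding A_def G_def by blast
    have A3: "adj A * A = 1\<^sub>m ?d"
      using step_matrix(3)[OF uV uV' h0 hi] ha n0 ha' i unfolding A_def G_def by blast
    have Ac: "A \<in> carrier_mat ?d ?d"
      using step_matrix(4)[OF uV uV' h0 hi] ha n0 ha' i unfolding A_def G_def by blast
    have A2: "Zq n j * A = \<epsilon> i j \<cdot>\<^sub>m (A * Zq n j)" if j: "j < n" for j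
    proof -
      obtain \<omega> where hj: "adj V * Zq n j * V = \<omega> \<cdot>\<^sub>m PZ n (a j) (C j)" using hV j by blast
      show ?thesis using step_matrix(2)[OF uV uV' hj hi] ha ha' i j unfolding A_def \<epsilon>_def by blast
    qed
    have mono: "\<forall>j<n. bit t j = (bit u j \<noteq> (\<epsilon> i j = -1))"
      if t: "t < ?d" and u: "u < ?d" and nz: "A $$ (t, u) \<noteq> 0" for t u
    proof (intro allI impI)
      fix j assume j: "j < n"
      have "(Zq n j * A) $$ (t, u) = (\<epsilon> i j \<cdot>\<^sub>m (A * Zq n j)) $$ (t, u)" using A2[OF j] by simp
      then have "(if bit t j then -1 else 1) * A $$ (t, u) = \<epsilon> i j * (A $$ (t, u) * (if bit u j then -1 else 1))"
        using t u Ac by (simp del: index_mult_mat add: index_mult_mat(2,3) carrier_matD[OF Ac] Zq_left_index Zq_right_index)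
      then have e: "(if bit t j then -1 else 1) = \<epsilon> i j * (if bit u j then -1 else (1::complex))"
        using nz by (simp add: field_simps)
      show "bit t j = (bit u j \<noteq> (\<epsilon> i j = -1))"
        using e eps_pm[of i j] by (cases "bit t j"; cases "bit u j") auto
    qed
    have uniq_col: "t = t'" if "t < ?d" "t' < ?d" "u < ?d" "A $$ (t, u) \<noteq> 0" "A $$ (t', u) \<noteq> 0" for t t' u
      using mono[of t u] mono[of t' u] that by (intro bits_eq[of t n t']) auto
    have uniq_row: "u = u'" if "t < ?d" "u < ?d" "u' < ?d" "A $$ (t, u) \<noteq> 0" "A $$ (t, u') \<noteq> 0" for t u u'
      using mono[of t u] mono[of t u'] that by (intro bits_eq[of u n u']) auto
    have colsum: "(\<Sum>t<?d. cnj (A $$ (t, m)) * A $$ (t, m)) = 1"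
    proof -
      have "(adj A * A) $$ (m, m) = 1" using A3 m by simp
      then show ?thesis using Ac m by (simp del: index_mult_mat add: mult_index_sum')
    qed
    obtain t where t: "t < ?d" "A $$ (t, m) \<noteq> 0"
    proof (rule ccontr)
      assume "\<not> thesis"
      then have "\<forall>t<?d. A $$ (t, m) = 0" using that by blast
      then have "(\<Sum>t<?d. cnj (A $$ (t, m)) * A $$ (t, m)) = 0" by simp
      then show False using colsum by simp
    qed
    have "(\<Sum>t'<?d. cnj (A $$ (t', m)) * A $$ (t', m)) = (\<Sum>t'<?d. if t' = t then cnj (A $$ (t, m)) * A $$ (t, m) else 0)"
    proof (intro sum.cong refl)
      fix t' assume t': "t' \<in> {..<?d}"
      show "cnj (A $$ (t', m)) * A $$ (t', m) = (if t' = t then cnj (A $$ (t, m)) * A $$ (t, m) else 0)"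
      proof (cases "t' = t")
        case False
        then have "A $$ (t', m) = 0" using uniq_col[of t' t m] t m t' by auto
        then show ?thesis using False by simp
      qed simp
    qed
    also have "\<dots> = cnj (A $$ (t, m)) * A $$ (t, m)" using t by simp
    finally have "cnj (A $$ (t, m)) * A $$ (t, m) = 1" using colsum by simp
    then have "complex_of_real ((cmod (A $$ (t, m)))^2) = 1" by (simp only: cnj_mult_self)
    then have "(cmod (A $$ (t, m)))^2 = 1" using of_real_eq_1_iff by blast
    then have nA: "cmod (A $$ (t, m)) = 1" using power2_eq_1_iff norm_ge_zero
      by (metis abs_of_nonneg abs_power2 one_neq_neg_one real_sqrt_abs real_sqrt_one)
    have "(A * G) $$ (t, x) = (\<Sum>u<?d. A $$ (t, u) * g u)"
      using Ac Gc t x by (simp del: index_mult_mat add: mult_index_sum' g_def)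
    also have "\<dots> = (\<Sum>u<?d. if u = m then A $$ (t, m) * g m else 0)"
    proof (intro sum.cong refl)
      fix u assume u: "u \<in> {..<?d}"
      show "A $$ (t, u) * g u = (if u = m then A $$ (t, m) * g m else 0)"
      proof (cases "u = m")
        case False
        then have "A $$ (t, u) = 0" using uniq_row[of t u m] t m u by auto
        then show ?thesis using False by simp
      qed simp
    qed
    also have "\<dots> = A $$ (t, m) * g m" using m by simp
    finally have l: "(A * G) $$ (t, x) = A $$ (t, m) * g m" .
    have r: "(G * Zq n i) $$ (t, x) = g t * (if bit x i then -1 else 1)"
      using Gc t x by (simp del: index_mult_mat add: Zq_right_index g_def)
    have "g t * (if bit x i then -1 else 1) = A $$ (t, m) * g m" using l r A1 by simp
    then have "cmod (g t * (if bit x i then -1 else 1)) = cmod (A $$ (t, m) * g m)" by simp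
    then have "cmod (g t) = cmod (g m)" using nA by (cases "bit x i") (simp_all add: norm_mult)
    then show ?thesis using t mono[OF t(1) m t(2)] by blast
  qed
  have orbit: "\<forall>b s. b < ?d \<longrightarrow> s < ?d \<longrightarrow> (\<forall>j<n. bit s j = (bit b j \<noteq> ((\<Prod>i\<in>S. \<epsilon> i j) = -1)))
      \<longrightarrow> cmod (g s) = cmod (g b)" if "finite S" "S \<subseteq> {..<n}" for S
    using that
  proof (induction S rule: finite_induct)
    case empty
    then show ?case using bits_eq by auto
  next
    case (insert i S)
    show ?case
    proof (intro allI impI)
      fix b s assume b: "b < ?d" and s: "s < ?d"
        and rel: "\<forall>j<n. bit s j = (bit b j \<noteq> ((\<Prod>i\<in>insert i S. \<epsilon> i j) = -1))"
      have i: "i < n" using insert by auto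
      obtain t where t: "t < ?d" "\<forall>j<n. bit t j = (bit s j \<noteq> (\<epsilon> i j = -1))" "cmod (g t) = cmod (g s)"
        using step[OF i s] by blast
      have "\<forall>j<n. bit t j = (bit b j \<noteq> ((\<Prod>i\<in>S. \<epsilon> i j) = -1))"
      proof (intro allI impI)
        fix j assume j: "j < n"
        have p: "(\<Prod>i\<in>insert i S. \<epsilon> i j) = \<epsilon> i j * (\<Prod>i\<in>S. \<epsilon> i j)" using insert by simp
        show "bit t j = (bit b j \<noteq> ((\<Prod>i\<in>S. \<epsilon> i j) = -1))"
          using t(2) rel j p pm_cases[OF eps_pm[of i j] prod_pm[where X=S and j=j]] by auto
      qed
      then have "cmod (g t) = cmod (g b)" using insert b t by auto
      then show "cmod (g s) = cmod (g b)" using t by simp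
    qed
  qed
  define f where "f S = {j \<in> {..<n}. (\<Prod>i\<in>S. \<epsilon> i j) = -1}" for S
  have inj: "inj_on f (Pow {..<n})"
  proof (rule inj_onI)
    fix S T assume S: "S \<in> Pow {..<n}" and T: "T \<in> Pow {..<n}" and fST: "f S = f T"
    have fin: "finite S" "finite T" using S T finite_subset by auto
    show "S = T"
    proof (rule ccontr)
      assume ne: "S \<noteq> T"
      define D where "D = (S - T) \<union> (T - S)"
      have "D \<subseteq> {..<n}" "D \<noteq> {}" using S T ne unfolding D_def by auto
      then obtain j where j: "j < n" "(\<Prod>i\<in>D. \<epsilon> i j) = -1" using nd' by blast
      have eq: "((\<Prod>i\<in>S. \<epsilon> i j) = -1) = ((\<Prod>i\<in>T. \<epsilon> i j) = -1)"
        using fST j unfolding f_def by (auto simp: set_eq_iff)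
      have ST: "(\<Prod>i\<in>S. \<epsilon> i j) = (\<Prod>i\<in>T. \<epsilon> i j)"
        using eq prod_pm[where X=S and j=j] prod_pm[where X=T and j=j] by auto
      have pS: "(\<Prod>i\<in>S. \<epsilon> i j) = (\<Prod>i\<in>S \<inter> T. \<epsilon> i j) * (\<Prod>i\<in>S - T. \<epsilon> i j)"
        using prod.Int_Diff[OF fin(1), of _ T] by simp
      have pT: "(\<Prod>i\<in>T. \<epsilon> i j) = (\<Prod>i\<in>S \<inter> T. \<epsilon> i j) * (\<Prod>i\<in>T - S. \<epsilon> i j)"
        using prod.Int_Diff[OF fin(2), of _ S] by (simp add: Int_commute)
      have pD: "(\<Prod>i\<in>D. \<epsilon> i j) = (\<Prod>i\<in>S - T. \<epsilon> i j) * (\<Prod>i\<in>T - S. \<epsilon> i j)"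
        unfolding D_def using fin by (intro prod.union_disjoint) auto
      have r0: "(\<Prod>i\<in>S \<inter> T. \<epsilon> i j) \<noteq> 0" using prod_pm[where X="S \<inter> T" and j=j] by auto
      have pq: "(\<Prod>i\<in>S - T. \<epsilon> i j) = (\<Prod>i\<in>T - S. \<epsilon> i j)" using ST pS pT r0 by simp
      have "(\<Prod>i\<in>D. \<epsilon> i j) = 1" using pD pq prod_pm[where X="S - T" and j=j] by auto
      then show False using j by simp
    qed
  qed
  have sub: "f ` Pow {..<n} \<subseteq> Pow {..<n}" unfolding f_def by auto
  have surj: "f ` Pow {..<n} = Pow {..<n}" by (rule endo_inj_surj[OF _ sub inj]) simp
  have same: "cmod (g s) = cmod (g 0)" if s: "s < ?d" for s
  proof -
    have "{j \<in> {..<n}. bit s j} \<in> f ` Pow {..<n}" using surj by auto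
    then obtain S where S: "S \<subseteq> {..<n}" "f S = {j \<in> {..<n}. bit s j}" by auto
    have fin: "finite S" using S finite_subset by auto
    have "\<forall>j<n. bit s j = (bit (0::nat) j \<noteq> ((\<Prod>i\<in>S. \<epsilon> i j) = -1))"
      using S(2) unfolding f_def by (auto simp: set_eq_iff)
    then show ?thesis using orbit[OF fin S(1)] s by auto
  qed
  have GG: "adj G * G = 1\<^sub>m ?d"
  proof -
    have "adj G = V' * adj V" unfolding G_def using adj_mult_n[of V n "adj V'"] V V' by simp
    then show ?thesis unfolding G_def using V V' VV
      by (simp add: assoc_n[where n=n] mult_n[where n=n] unitary_simps[OF uV])
  qed
  have "(\<Sum>s<?d. cnj (g s) * g s) = 1"
  proof -
    have "(adj G * G) $$ (x, x) = 1" using GG x by simp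
    then show ?thesis using Gc x by (simp del: index_mult_mat add: mult_index_sum' g_def)
  qed
  then have "(\<Sum>s<?d. complex_of_real ((cmod (g s))^2)) = 1" by (simp add: cnj_mult_self)
  then have "complex_of_real (\<Sum>s<?d. (cmod (g s))^2) = 1" by (simp only: of_real_sum)
  then have "(\<Sum>s<?d. (cmod (g s))^2) = 1" by (simp only: of_real_eq_1_iff)
  moreover have "(\<Sum>s<?d. (cmod (g s))^2) = (\<Sum>s<?d. (cmod (g 0))^2)"
    by (rule sum.cong[OF refl]) (metis same lessThan_iff)
  ultimately have "(\<Sum>s<?d. (cmod (g 0))^2) = 1" by simp
  then have "real ?d * (cmod (g 0))^2 = 1" by simp
  then have "(cmod (g 0))^2 = 1 / 2^n" by (simp add: field_simps)
  then show ?thesis using same[OF b] unfolding g_def G_def by metis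
qed



lemma gf2_cases: "(a::gf2) = 0 \<or> a = 1"
proof -
  obtain i where "i < CARD(bool)" "a = of_nat i" using surj_of_nat_mod_ring by blast
  then show ?thesis by (cases i; auto; rename_tac j; case_tac j; auto)
qed

lemma gf2_two: "(1::gf2) + 1 = 0"
proof -
  have "(of_nat (CARD(bool)) :: gf2) = 0" by (rule of_nat_card_eq_0)
  then show ?thesis by simp
qed

definition chi :: "gf2 \<Rightarrow> complex" where "chi x = (if x = 0 then 1 else -1)"

lemma chi_add: "chi (x + y) = chi x * chi y"
  using gf2_cases[of x] gf2_cases[of y] gf2_two by (auto simp: chi_def)

lemma chi_sum: "chi (\<Sum>i\<in>S. f i) = (\<Prod>i\<in>S. chi (f i))"
proof (induction S rule: infinite_finite_induct)
  case (insert x F)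
  then show ?case by (simp add: chi_add)
qed (auto simp: chi_def)

definition Lf :: "gf2 poly \<Rightarrow> gf2 poly \<Rightarrow> gf2" where "Lf P q = coeff (q mod P) 0"

lemma Lf_add: "Lf P (p + q) = Lf P p + Lf P q"
  by (simp add: Lf_def poly_mod_add_left)

lemma Lf_smult: "Lf P (smult c p) = c * Lf P p"
  by (simp add: Lf_def mod_smult_left)

lemma Lf_zero[simp]: "Lf P 0 = 0"
  by (simp add: Lf_def)

lemma Lf_sum: "Lf P (\<Sum>i\<in>S. f i) = (\<Sum>i\<in>S. Lf P (f i))"
  by (induction S rule: infinite_finite_induct) (auto simp: Lf_add)

lemma Lf_mod: "Lf P ((p mod P) * q) = Lf P (p * q)"
  by (simp add: Lf_def mod_mult_left_eq)

lemma ntp_coeff: "coeff (nat_to_poly n a) k = (if k < n \<and> bit a k then 1 else 0)"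
  unfolding nat_to_poly_def coeff_sum coeff_monom by simp

lemma ntp_pow2: "i < n \<Longrightarrow> nat_to_poly n (2^i) = monom 1 i"
  by (rule poly_eqI) (auto simp: ntp_coeff coeff_monom bit_exp_iff)

lemma poly_expand: "(\<forall>k\<ge>n. coeff (u::gf2 poly) k = 0) \<Longrightarrow> u = (\<Sum>p<n. smult (coeff u p) (monom 1 p))"
proof (rule poly_eqI)
  fix k assume h: "\<forall>k\<ge>n. coeff u k = 0"
  have "(\<Sum>p<n. coeff u p * (if p = k then 1 else 0)) = (\<Sum>p<n. if p = k then coeff u k else 0)"
    by (intro sum.cong refl) auto
  also have "\<dots> = coeff u k" using h by (auto simp: sum.delta)
  finally show "coeff u k = coeff (\<Sum>p<n. smult (coeff u p) (monom 1 p)) k"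
    by (simp add: coeff_sum coeff_monom)
qed

lemma mod_high: "P \<noteq> 0 \<Longrightarrow> degree P = n \<Longrightarrow> \<forall>k\<ge>n. coeff (q mod P) k = 0"
  using degree_mod_less[of P q] by (auto intro: coeff_eq_0)

lemma M0_Lf: "M0 P p j = Lf P (monom 1 (p + j))"
  by (simp add: M0_def Gamma_def Lf_def)

lemma alpha_char:
  assumes P: "P \<noteq> 0" "degree P = n" and i: "i < n"
  shows "alpha n P v i j = (if Lf P (nat_to_poly n v * monom 1 (i + j)) = 0 then 0 else 1)"
proof -
  define u where "u = gf_mult n P v (2^i)"
  have u: "u = (nat_to_poly n v * monom 1 i) mod P"
    unfolding u_def gf_mult_def using ntp_pow2[OF i] by simp
  have hi: "\<forall>k\<ge>n. coeff u k = 0" unfolding u using mod_high[OF P] by blast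
  have "(\<Sum>p<n. coeff u p * M0 P p j) = (\<Sum>p<n. Lf P (smult (coeff u p) (monom 1 p * monom 1 j)))"
    by (simp add: M0_Lf Lf_smult mult_monom)
  also have "\<dots> = Lf P ((\<Sum>p<n. smult (coeff u p) (monom 1 p)) * monom 1 j)"
    by (simp add: Lf_sum sum_distrib_right)
  also have "\<dots> = Lf P (u * monom 1 j)" using poly_expand[OF hi] by simp
  also have "\<dots> = Lf P (nat_to_poly n v * monom 1 (i + j))"
    unfolding u Lf_mod by (simp add: mult.assoc mult_monom)
  finally have "(\<Sum>p<n. coeff (gf_mult n P v (2^i)) p * M0 P p j) = Lf P (nat_to_poly n v * monom 1 (i + j))"
    unfolding u_def .
  then show ?thesis unfolding alpha_def by simp
qed

lemma key_poly:
  assumes irr: "irreducible P" and dP: "degree P = n"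
    and w: "w \<noteq> 0" "\<forall>k\<ge>n. coeff w k = 0" and q: "q \<noteq> 0" "\<forall>k\<ge>n. coeff q k = 0"
  shows "\<exists>j<n. Lf P (w * q * monom 1 j) \<noteq> 0"
proof (rule ccontr)
  assume con: "\<not> ?thesis"
  have P0: "P \<noteq> 0" using irr by auto
  have pr: "prime_elem P" using irr by (rule irreducible_imp_prime_elem)
  have dw: "degree w < n"
  proof (rule ccontr)
    assume "\<not> degree w < n"
    then have "coeff w (degree w) = 0" using w(2) by auto
    then show False using w(1) by simp
  qed
  have dq: "degree q < n"
  proof (rule ccontr)
    assume "\<not> degree q < n"
    then have "coeff q (degree q) = 0" using q(2) by auto
    then show False using q(1) by simp
  qed
  have nw: "\<not> P dvd w" using dvd_imp_degree_le[of P w] w(1) dw dP by auto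
  have nq: "\<not> P dvd q" using dvd_imp_degree_le[of P q] q(1) dq dP by auto
  define z where "z = w * q"
  have nz: "\<not> P dvd z" unfolding z_def using pr nw nq prime_elem_dvd_mult_iff by blast
  have cop: "coprime z P" using prime_elem_imp_coprime[OF pr nz] by (simp add: ac_simps)
  define y where "y = fst (bezout_coefficients z P)"
  define t where "t = snd (bezout_coefficients z P)"
  have bz: "y * z + t * P = 1"
    using bezout_coefficients_fst_snd[of z P] coprime_imp_gcd_eq_1[OF cop] unfolding y_def t_def by simp
  have nP: "n > 0"
  proof (rule ccontr)
    assume "\<not> n > 0"
    then have "degree P = 0" using dP by simp
    then have "is_unit P" using P0 by (simp add: is_unit_iff_degree)
    then show False using irr by auto
  qed
  have one: "(1::gf2 poly) mod P = 1" by (rule mod_poly_less) (use dP nP in simp)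
  have "(y * z) mod P = 1"
  proof -
    have "(y * z + t * P) mod P = (y * z) mod P" by (simp add: poly_mod_add_left)
    then show ?thesis using bz one by simp
  qed
  then have L1: "Lf P ((y mod P) * z) = 1" unfolding Lf_mod by (simp add: Lf_def)
  have hi: "\<forall>k\<ge>n. coeff (y mod P) k = 0" using mod_high[OF P0 dP] by blast
  have "Lf P ((y mod P) * z) = Lf P ((\<Sum>j<n. smult (coeff (y mod P) j) (monom 1 j)) * z)"
    using poly_expand[OF hi] by simp
  also have "\<dots> = Lf P (\<Sum>j<n. smult (coeff (y mod P) j) (monom 1 j * z))"
    by (simp only: sum_distrib_right mult_smult_left)
  also have "\<dots> = (\<Sum>j<n. coeff (y mod P) j * Lf P (monom 1 j * z))"
    by (simp only: Lf_sum Lf_smult)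
  also have "\<dots> = (\<Sum>j<n. coeff (y mod P) j * Lf P (w * q * monom 1 j))"
    by (simp only: z_def mult.commute)
  also have "\<dots> = 0" using con by simp
  finally show False using L1 by simp
qed



lemma one_PZ: "1\<^sub>m (2^n) = PZ n 0 {}"
  by (rule eq_matI) (auto simp: PZ_def sg_def)

lemma Zq_pow: "f \<le> 1 \<Longrightarrow> Zq n j ^\<^sub>m f = (if f = 1 then Zq n j else 1\<^sub>m (2^n))"
  by (cases f) (auto simp: left_mult_one_mat[OF Zq_carrier])

lemma sg_insert: "finite C \<Longrightarrow> j \<notin> C \<Longrightarrow> sg (insert j C) s = (if bit s j then -1 else 1) * sg C s"
  by (simp add: sg_def)

lemma mprod_Z:
  "distinct xs \<Longrightarrow> (\<forall>j. f j \<le> 1) \<Longrightarrow>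
   mprod (2^n) (map (\<lambda>j. Zq n j ^\<^sub>m f j) xs) = PZ n 0 {j \<in> set xs. f j = 1}"
proof (induction xs)
  case Nil
  then show ?case by (simp add: mprod_def one_PZ)
next
  case (Cons j xs)
  have IH: "mprod (2^n) (map (\<lambda>j. Zq n j ^\<^sub>m f j) xs) = PZ n 0 {j \<in> set xs. f j = 1}"
    using Cons by simp
  have split: "mprod (2^n) (map (\<lambda>j. Zq n j ^\<^sub>m f j) (j # xs)) = Zq n j ^\<^sub>m f j * mprod (2^n) (map (\<lambda>j. Zq n j ^\<^sub>m f j) xs)"
    by (simp add: mprod_def)
  show ?case
  proof (cases "f j = 1")
    case False
    then have "{l \<in> set (j # xs). f l = 1} = {l \<in> set xs. f l = 1}" by auto
    then show ?thesis using False Cons.prems split IH by (simp add: Zq_pow)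
  next
    case True
    have nj: "j \<notin> {l \<in> set xs. f l = 1}" using Cons.prems by auto
    have eq: "{l \<in> set (j # xs). f l = 1} = insert j {l \<in> set xs. f l = 1}" using True by auto
    have "Zq n j * PZ n 0 {l \<in> set xs. f l = 1} = PZ n 0 (insert j {l \<in> set xs. f l = 1})"
    proof (rule eq_matI)
      fix r s assume "r < dim_row (PZ n 0 (insert j {l \<in> set xs. f l = 1}))" "s < dim_col (PZ n 0 (insert j {l \<in> set xs. f l = 1}))"
      then have rs: "r < 2^n" "s < 2^n" by auto
      show "(Zq n j * PZ n 0 {l \<in> set xs. f l = 1}) $$ (r, s) = PZ n 0 (insert j {l \<in> set xs. f l = 1}) $$ (r, s)"
        unfolding Zq_PZ using rs nj
        by (simp del: index_mult_mat add: PZ_mult_index PZ_index sg_insert sg_single)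
    qed (auto simp: Zq_def)
    then show ?thesis using True split IH eq by (simp add: Zq_pow)
  qed
qed

definition Cset :: "nat \<Rightarrow> gf2 poly \<Rightarrow> nat \<Rightarrow> nat \<Rightarrow> nat set" where
  "Cset n P v i = {j \<in> set [0..<n]. alpha n P v i j = 1}"

lemma Cset_finite[simp]: "finite (Cset n P v i)"
  by (simp add: Cset_def)

lemma alpha_le1: "alpha n P v i j \<le> 1"
  by (simp add: alpha_def)

lemma gen_g_PZ:
  assumes i: "i < n"
  shows "gen_g n P v i = (\<i> ^ alpha n P v i i) \<cdot>\<^sub>m PZ n (2^i) (Cset n P v i)"
proof -
  have m: "mprod (2 ^ n) (map (\<lambda>j. Zq n j ^\<^sub>m alpha n P v i j) [0..<n]) = PZ n 0 (Cset n P v i)"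
    unfolding Cset_def by (rule mprod_Z) (auto simp: alpha_def)
  have i2: "(2::nat)^i < 2^n" using i by simp
  have "Xq n i * PZ n 0 (Cset n P v i) = PZ n (2^i) (Cset n P v i)"
  proof (rule eq_matI)
    fix r s assume "r < dim_row (PZ n (2^i) (Cset n P v i))" "s < dim_col (PZ n (2^i) (Cset n P v i))"
    then have rs: "r < 2^n" "s < 2^n" by auto
    show "(Xq n i * PZ n 0 (Cset n P v i)) $$ (r, s) = PZ n (2^i) (Cset n P v i) $$ (r, s)"
      unfolding Xq_PZ using rs i2
      by (simp del: index_mult_mat add: PZ_mult_index PZ_index sg_def)
  qed (auto simp: Xq_def)
  then show ?thesis unfolding gen_g_def m by simp
qed

lemma neg_smult: "- (c \<cdot>\<^sub>m (A::complex mat)) = (- c) \<cdot>\<^sub>m A"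
  by (rule eq_matI) auto

lemma stabU:
  assumes "mub_unitary n P v V"
  shows "\<forall>j<n. \<exists>\<omega>. adj V * Zq n j * V = \<omega> \<cdot>\<^sub>m PZ n (2^j) (Cset n P v j)"
proof (intro allI impI)
  fix j assume j: "j < n"
  have "adj V * Zq n j * V = gen_g n P v j \<or> adj V * Zq n j * V = - gen_g n P v j"
    using assms j by (simp add: mub_unitary_def)
  then show "\<exists>\<omega>. adj V * Zq n j * V = \<omega> \<cdot>\<^sub>m PZ n (2^j) (Cset n P v j)"
    using gen_g_PZ[OF j, of P v] by (auto simp: neg_smult)
qed

lemma stabI: "\<forall>j<n. \<exists>\<omega>. adj (1\<^sub>m (2^n)) * Zq n j * 1\<^sub>m (2^n) = \<omega> \<cdot>\<^sub>m PZ n 0 {j}"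
proof (intro allI impI exI)
  fix j
  show "adj (1\<^sub>m (2^n)) * Zq n j * 1\<^sub>m (2^n) = 1 \<cdot>\<^sub>m PZ n 0 {j}"
    by (rule eq_matI) (auto simp: Zq_PZ[symmetric])
qed

lemma unitary_one: "is_unitary n (1\<^sub>m (2^n))"
  by (simp add: is_unitary_def)

lemma unitary_U: "mub_unitary n P v V \<Longrightarrow> is_unitary n V"
  by (simp add: mub_unitary_def clifford_def)

lemma Cset_mem:
  assumes "P \<noteq> 0" "degree P = n" "j < n"
  shows "(i \<in> Cset n P v j) = (i < n \<and> Lf P (nat_to_poly n v * monom 1 (j + i)) \<noteq> 0)"
  using alpha_char[OF assms, of v i] by (auto simp: Cset_def)

lemma sg_Cset:
  assumes "P \<noteq> 0" "degree P = n" "j < n" "i < n"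
  shows "sg (Cset n P v j) (2^i) = chi (Lf P (nat_to_poly n v * monom 1 (i + j)))"
  using Cset_mem[OF assms(1-3), of i v] assms(4) by (simp add: sg_pow2 chi_def add.commute)

lemma nd_UU:
  assumes irr: "irreducible P" and dP: "degree P = n" and v: "v < 2^n" "v' < 2^n" "v \<noteq> v'"
  shows "\<forall>S\<subseteq>{..<n}. S \<noteq> {} \<longrightarrow> (\<exists>j<n. (\<Prod>i\<in>S. sg (Cset n P v j) (2^i) * sg (Cset n P v' i) (2^j)) = -1)"
proof (intro allI impI)
  fix S assume S: "S \<subseteq> {..<n}" "S \<noteq> {}"
  have P0: "P \<noteq> 0" using irr by auto
  have fin: "finite S" by (rule finite_subset[OF S(1)]) simp
  define w where "w = nat_to_poly n v + nat_to_poly n v'"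
  define q where "q = (\<Sum>i\<in>S. monom (1::gf2) i)"
  have w0: "w \<noteq> 0"
  proof
    assume w0: "w = 0"
    have "\<forall>k<n. bit v k = bit v' k"
    proof (intro allI impI)
      fix k assume k: "k < n"
      have "coeff w k = 0" using w0 by simp
      then have "(if bit v k then 1 else 0) + (if bit v' k then 1 else (0::gf2)) = 0"
        using k unfolding w_def by (simp add: ntp_coeff)
      then show "bit v k = bit v' k" by (auto split: if_splits)
    qed
    then show False using bits_eq[OF v(1,2)] v(3) by blast
  qed
  have wh: "\<forall>k\<ge>n. coeff w k = 0" unfolding w_def by (simp add: ntp_coeff)
  have qc: "coeff q k = (if k \<in> S then 1 else 0)" for k
    unfolding q_def coeff_sum coeff_monom using fin by simp
  have q0: "q \<noteq> 0" using S(2) qc by (metis all_not_in_conv coeff_0 one_neq_zero)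
  have qh: "\<forall>k\<ge>n. coeff q k = 0" using qc S(1) by auto
  obtain j where j: "j < n" "Lf P (w * q * monom 1 j) \<noteq> 0"
    using key_poly[OF irr dP w0 wh q0 qh] by blast
  have "(\<Prod>i\<in>S. sg (Cset n P v j) (2^i) * sg (Cset n P v' i) (2^j))
      = (\<Prod>i\<in>S. chi (Lf P (w * monom 1 (i + j))))"
  proof (rule prod.cong[OF refl])
    fix i assume "i \<in> S"
    then have i: "i < n" using S by auto
    show "sg (Cset n P v j) (2^i) * sg (Cset n P v' i) (2^j) = chi (Lf P (w * monom 1 (i + j)))"
      using sg_Cset[OF P0 dP j(1) i, of v] sg_Cset[OF P0 dP i j(1), of v']
      by (simp add: w_def distrib_right Lf_add chi_add add.commute)
  qed
  also have "\<dots> = chi (\<Sum>i\<in>S. Lf P (w * monom 1 (i + j)))" by (simp add: chi_sum)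
  also have "\<dots> = chi (Lf P (w * q * monom 1 j))"
  proof -
    have "w * q * monom 1 j = (\<Sum>i\<in>S. w * monom 1 (i + j))"
      unfolding q_def by (simp add: sum_distrib_left sum_distrib_right mult.assoc mult_monom)
    then show ?thesis by (simp add: Lf_sum)
  qed
  also have "\<dots> = -1" using j(2) by (simp add: chi_def)
  finally show "\<exists>j<n. (\<Prod>i\<in>S. sg (Cset n P v j) (2^i) * sg (Cset n P v' i) (2^j)) = -1"
    using j(1) by blast
qed

lemma nd_delta:
  assumes "\<And>i j. i < (n::nat) \<Longrightarrow> j < n \<Longrightarrow> e i j = (if i = j then -1 else (1::complex))"
  shows "\<forall>S\<subseteq>{..<n}. S \<noteq> {} \<longrightarrow> (\<exists>j<n. (\<Prod>i\<in>S. e i j) = -1)"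
proof (intro allI impI)
  fix S assume S: "S \<subseteq> {..<n}" "S \<noteq> {}"
  then obtain j where j: "j \<in> S" by auto
  have fin: "finite S" by (rule finite_subset[OF S(1)]) simp
  have jn: "j < n" using j S by auto
  have "(\<Prod>i\<in>S. e i j) = (\<Prod>i\<in>S. if i = j then -1 else 1)"
    using S jn assms by (intro prod.cong refl) auto
  also have "\<dots> = -1" using fin j by simp
  finally show "\<exists>j<n. (\<Prod>i\<in>S. e i j) = -1" using jn by blast
qed

lemma mub_pairs:
  assumes irr: "irreducible P" and dP: "degree P = n"
    and hU: "\<forall>v<2^n. mub_unitary n P v (U v)"
    and k: "k \<in> ens_index n" and k': "k' \<in> ens_index n" and kk: "k \<noteq> k'"
    and x: "x < 2^n" and b: "b < 2^n"
  shows "(cmod ((ens n U k * adj (ens n U k')) $$ (b, x)))^2 = 1 / 2^n"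
proof (cases k)
  case None
  then obtain v' where k'v: "k' = Some v'" "v' < 2^n" using kk k' by (auto simp: ens_index_def)
  have u': "mub_unitary n P v' (U v')" using hU k'v by blast
  show ?thesis unfolding None k'v(1) ens_def option.case
  proof (rule mub_core[OF unitary_one unitary_U[OF u'] stabI stabU[OF u'] _ _ _ x b])
    show "\<forall>j<n. (0::nat) < 2^n" by simp
    show "\<forall>i<n. (2::nat)^i < 2^n" by simp
    show "\<forall>S\<subseteq>{..<n}. S \<noteq> {} \<longrightarrow> (\<exists>j<n. (\<Prod>i\<in>S. sg {j} (2^i) * sg (Cset n P v' i) 0) = -1)"
      by (rule nd_delta) (auto simp: sg_single bit_exp_iff)
  qed
next
  case (Some v)
  have v: "v < 2^n" using k Some by (auto simp: ens_index_def)
  have u: "mub_unitary n P v (U v)" using hU v by blast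
  show ?thesis
  proof (cases k')
    case None
    show ?thesis unfolding None Some ens_def option.case
    proof (rule mub_core[OF unitary_U[OF u] unitary_one stabU[OF u] stabI _ _ _ x b])
      show "\<forall>j<n. (2::nat)^j < 2^n" by simp
      show "\<forall>i<n. (0::nat) < 2^n" by simp
      show "\<forall>S\<subseteq>{..<n}. S \<noteq> {} \<longrightarrow> (\<exists>j<n. (\<Prod>i\<in>S. sg (Cset n P v j) 0 * sg {i} (2^j)) = -1)"
        by (rule nd_delta) (auto simp: sg_single bit_exp_iff)
    qed
  next
    case (Some v')
    have v': "v' < 2^n" "v \<noteq> v'" using k' Some kk \<open>k = Some v\<close> by (auto simp: ens_index_def)
    have u': "mub_unitary n P v' (U v')" using hU v' by blast
    show ?thesis unfolding Some \<open>k = Some v\<close> ens_def option.case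
    proof (rule mub_core[OF unitary_U[OF u] unitary_U[OF u'] stabU[OF u] stabU[OF u'] _ _ _ x b])
      show "\<forall>j<n. (2::nat)^j < 2^n" by simp
      show "\<forall>i<n. (2::nat)^i < 2^n" by simp
      show "\<forall>S\<subseteq>{..<n}. S \<noteq> {} \<longrightarrow> (\<exists>j<n. (\<Prod>i\<in>S. sg (Cset n P v j) (2^i) * sg (Cset n P v' i) (2^j)) = -1)"
        by (rule nd_UU[OF irr dP v v'])
    qed
  qed
qed



lemma swap3: "(\<Sum>s\<in>B. \<Sum>b1\<in>C. \<Sum>b2\<in>D. f s b1 b2) = (\<Sum>b1\<in>C. \<Sum>b2\<in>D. \<Sum>s\<in>B. (f s b1 b2::'a::comm_monoid_add))"
proof -
  have "(\<Sum>s\<in>B. \<Sum>b1\<in>C. \<Sum>b2\<in>D. f s b1 b2) = (\<Sum>b1\<in>C. \<Sum>s\<in>B. \<Sum>b2\<in>D. f s b1 b2)"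
    by (rule sum.swap)
  also have "\<dots> = (\<Sum>b1\<in>C. \<Sum>b2\<in>D. \<Sum>s\<in>B. f s b1 b2)"
    by (rule sum.cong[OF refl], rule sum.swap)
  finally show ?thesis .
qed

lemma swap4: "(\<Sum>r\<in>A. \<Sum>s\<in>B. \<Sum>b1\<in>C. \<Sum>b2\<in>D. f r s b1 b2) = (\<Sum>b1\<in>C. \<Sum>b2\<in>D. \<Sum>r\<in>A. \<Sum>s\<in>B. (f r s b1 b2::'a::comm_monoid_add))"
proof -
  have "(\<Sum>r\<in>A. \<Sum>s\<in>B. \<Sum>b1\<in>C. \<Sum>b2\<in>D. f r s b1 b2) = (\<Sum>r\<in>A. \<Sum>b1\<in>C. \<Sum>b2\<in>D. \<Sum>s\<in>B. f r s b1 b2)"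
    by (rule sum.cong[OF refl], rule swap3)
  also have "\<dots> = (\<Sum>b1\<in>C. \<Sum>b2\<in>D. \<Sum>r\<in>A. \<Sum>s\<in>B. f r s b1 b2)"
    by (rule swap3)
  finally show ?thesis .
qed

lemma phi_index:
  assumes V: "V \<in> carrier_mat (2^n) (2^n)" and r: "r < 2^n" and b: "b < 2^n"
  shows "phi n V b $ r = cnj (V $$ (b, r))"
proof -
  have "phi n V b $ r = row (adj V) r \<bullet> unit_vec (2^n) b"
    unfolding phi_def ket_def using V r by simp
  also have "\<dots> = adj V $$ (r, b)" using V r b by simp
  finally show ?thesis using V r b by simp
qed

lemma OF_index:
  assumes V: "V \<in> carrier_mat (2^n) (2^n)" and r: "r < 2^n" and s: "s < 2^n"
  shows "O_F n V Ob $$ (r, s) = (\<Sum>b1<2^n. \<Sum>b2<2^n. if b1 \<noteq> b2 then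
          Oel n V Ob b1 b2 * cnj (V $$ (b1, r)) * V $$ (b2, s) else 0)"
  unfolding O_F_def using r s
  by (simp, intro sum.cong refl) (simp add: phi_index[OF V])

lemma snap_index:
  assumes V: "V \<in> carrier_mat (2^n) (2^n)" and x: "x < 2^n" and s: "s < 2^n" and r: "r < 2^n"
  shows "snapshot n V x $$ (s, r) = of_nat (2^n + 1) * (cnj (V $$ (x, s)) * V $$ (x, r)) - (if s = r then 1 else 0)"
proof -
  let ?E = "couter (ket n x) (ket n x)"
  have Ec: "?E \<in> carrier_mat (2^n) (2^n)" by (simp add: couter_def ket_def)
  have Ei: "?E $$ (u, t) = (if u = x \<and> t = x then 1 else 0)" if "u < 2^n" "t < 2^n" for u t
    using that x by (simp add: couter_def ket_def)
  have M: "(adj V * ?E) $$ (s, t) = cnj (V $$ (x, s)) * (if t = x then 1 else 0)" if t: "t < 2^n" for t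
  proof -
    have "(adj V * ?E) $$ (s, t) = (\<Sum>u<2^n. adj V $$ (s, u) * ?E $$ (u, t))"
      using V Ec s t by (simp del: index_mult_mat add: mult_index_sum')
    also have "\<dots> = (\<Sum>u<2^n. if u = x then cnj (V $$ (x, s)) * (if t = x then 1 else 0) else 0)"
      using V s t by (intro sum.cong refl) (auto simp: Ei)
    also have "\<dots> = cnj (V $$ (x, s)) * (if t = x then 1 else 0)" using x by simp
    finally show ?thesis .
  qed
  have "(adj V * ?E * V) $$ (s, r) = (\<Sum>t<2^n. (adj V * ?E) $$ (s, t) * V $$ (t, r))"
    using V Ec s r by (simp del: index_mult_mat add: mult_index_sum' index_mult_mat(2,3))
  also have "\<dots> = (\<Sum>t<2^n. if t = x then cnj (V $$ (x, s)) * V $$ (x, r) else 0)"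
    by (intro sum.cong refl) (auto simp: M)
  also have "\<dots> = cnj (V $$ (x, s)) * V $$ (x, r)" using x by simp
  finally have "(adj V * ?E * V) $$ (s, r) = cnj (V $$ (x, s)) * V $$ (x, r)" .
  then show ?thesis unfolding snapshot_def using V Ec s r by simp
qed

lemma trace_formula:
  assumes uV: "is_unitary n V" and uV': "is_unitary n V'" and x: "x < 2^n"
  shows "mtrace (O_F n V Ob * snapshot n V' x) = of_nat (2^n + 1) *
     (\<Sum>b1<2^n. \<Sum>b2<2^n. if b1 \<noteq> b2 then Oel n V Ob b1 b2 *
         (cnj ((V * adj V') $$ (b1, x)) * (V * adj V') $$ (b2, x)) else 0)"
proof -
  let ?d = "2^n::nat"
  let ?F = "O_F n V Ob"
  let ?O = "Oel n V Ob"
  have V: "V \<in> carrier_mat ?d ?d" and V': "V' \<in> carrier_mat ?d ?d"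
    using uV uV' by (auto simp: is_unitary_def)
  have Fc: "?F \<in> carrier_mat ?d ?d" unfolding O_F_def by (rule mat_carrier)
  have Sc: "snapshot n V' x \<in> carrier_mat ?d ?d"
  proof -
    have "dim_row (snapshot n V' x) = ?d" "dim_col (snapshot n V' x) = ?d"
      unfolding snapshot_def by (simp_all only: index_minus_mat(2,3) index_one_mat(2,3))
    then show ?thesis by (simp only: carrier_mat_def mem_Collect_eq)
  qed
  define c1 where "c1 b1 r = cnj (V $$ (b1, r)) * V' $$ (x, r)" for b1 r
  define c2 where "c2 b2 s = V $$ (b2, s) * cnj (V' $$ (x, s))" for b2 s
  have G1: "(\<Sum>r<?d. c1 b1 r) = cnj ((V * adj V') $$ (b1, x))" if "b1 < ?d" for b1
    using that V V' x by (simp del: index_mult_mat add: mult_index_sum' c1_def mult.commute)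
  have G2: "(\<Sum>s<?d. c2 b2 s) = (V * adj V') $$ (b2, x)" if "b2 < ?d" for b2
    using that V V' x by (simp del: index_mult_mat add: mult_index_sum' c2_def)
  have "mtrace (?F * snapshot n V' x) = (\<Sum>r<?d. \<Sum>s<?d. ?F $$ (r, s) * snapshot n V' x $$ (s, r))"
    unfolding mtrace_def using Fc Sc by (simp del: index_mult_mat add: mult_index_sum' index_mult_mat(2,3))
  also have "\<dots> = (\<Sum>r<?d. \<Sum>s<?d. of_nat (?d + 1) * (?F $$ (r, s) * (cnj (V' $$ (x, s)) * V' $$ (x, r)))
        - (if s = r then ?F $$ (r, s) else 0))"
    using V' x by (intro sum.cong refl) (auto simp: snap_index algebra_simps)
  also have "\<dots> = of_nat (?d + 1) * (\<Sum>r<?d. \<Sum>s<?d. ?F $$ (r, s) * (cnj (V' $$ (x, s)) * V' $$ (x, r)))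
        - (\<Sum>r<?d. ?F $$ (r, r))"
    by (simp add: sum_subtractf sum_distrib_left)
  also have "(\<Sum>r<?d. \<Sum>s<?d. ?F $$ (r, s) * (cnj (V' $$ (x, s)) * V' $$ (x, r))) =
      (\<Sum>r<?d. \<Sum>s<?d. \<Sum>b1<?d. \<Sum>b2<?d. if b1 \<noteq> b2 then ?O b1 b2 * (c1 b1 r * c2 b2 s) else 0)"
  proof (intro sum.cong refl)
    fix r s assume rs: "r \<in> {..<?d}" "s \<in> {..<?d}"
    have "?F $$ (r, s) * (cnj (V' $$ (x, s)) * V' $$ (x, r)) =
      (\<Sum>b1<?d. \<Sum>b2<?d. (if b1 \<noteq> b2 then ?O b1 b2 * cnj (V $$ (b1, r)) * V $$ (b2, s) else 0) * (cnj (V' $$ (x, s)) * V' $$ (x, r)))"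
      using rs by (simp add: OF_index[OF V] sum_distrib_right)
    also have "\<dots> = (\<Sum>b1<?d. \<Sum>b2<?d. if b1 \<noteq> b2 then ?O b1 b2 * (c1 b1 r * c2 b2 s) else 0)"
      by (intro sum.cong refl) (simp add: c1_def c2_def ac_simps)
    finally show "?F $$ (r, s) * (cnj (V' $$ (x, s)) * V' $$ (x, r)) =
      (\<Sum>b1<?d. \<Sum>b2<?d. if b1 \<noteq> b2 then ?O b1 b2 * (c1 b1 r * c2 b2 s) else 0)" .
  qed
  also have "\<dots> = (\<Sum>b1<?d. \<Sum>b2<?d. \<Sum>r<?d. \<Sum>s<?d. if b1 \<noteq> b2 then ?O b1 b2 * (c1 b1 r * c2 b2 s) else 0)"
    by (rule swap4)
  also have "\<dots> = (\<Sum>b1<?d. \<Sum>b2<?d. if b1 \<noteq> b2 then ?O b1 b2 * ((\<Sum>r<?d. c1 b1 r) * (\<Sum>s<?d. c2 b2 s)) else 0)"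
  proof (intro sum.cong refl)
    fix b1 b2
    have "?O b1 b2 * ((\<Sum>r<?d. c1 b1 r) * (\<Sum>s<?d. c2 b2 s)) = (\<Sum>r<?d. \<Sum>s<?d. ?O b1 b2 * (c1 b1 r * c2 b2 s))"
    proof -
      have "(\<Sum>r<?d. c1 b1 r) * (\<Sum>s<?d. c2 b2 s) = (\<Sum>r<?d. \<Sum>s<?d. c1 b1 r * c2 b2 s)"
        by (rule sum_product)
      then show ?thesis by (simp add: sum_distrib_left)
    qed
    then show "(\<Sum>r<?d. \<Sum>s<?d. if b1 \<noteq> b2 then ?O b1 b2 * (c1 b1 r * c2 b2 s) else 0) =
       (if b1 \<noteq> b2 then ?O b1 b2 * ((\<Sum>r<?d. c1 b1 r) * (\<Sum>s<?d. c2 b2 s)) else 0)"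
      by simp
  qed
  also have "\<dots> = (\<Sum>b1<?d. \<Sum>b2<?d. if b1 \<noteq> b2 then ?O b1 b2 *
         (cnj ((V * adj V') $$ (b1, x)) * (V * adj V') $$ (b2, x)) else 0)"
    by (intro sum.cong refl) (simp add: G1 G2)
  also have "(\<Sum>r<?d. ?F $$ (r, r)) = 0"
  proof -
    have "(\<Sum>r<?d. ?F $$ (r, r)) = (\<Sum>r<?d. \<Sum>b1<?d. \<Sum>b2<?d. if b1 \<noteq> b2 then ?O b1 b2 * (V $$ (b2, r) * cnj (V $$ (b1, r))) else 0)"
    proof (intro sum.cong refl)
      fix r assume r: "r \<in> {..<?d}"
      show "?F $$ (r, r) = (\<Sum>b1<?d. \<Sum>b2<?d. if b1 \<noteq> b2 then ?O b1 b2 * (V $$ (b2, r) * cnj (V $$ (b1, r))) else 0)"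
        using r by (simp add: OF_index[OF V], intro sum.cong refl, simp add: ac_simps)
    qed
    also have "\<dots> = (\<Sum>b1<?d. \<Sum>b2<?d. \<Sum>r<?d. if b1 \<noteq> b2 then ?O b1 b2 * (V $$ (b2, r) * cnj (V $$ (b1, r))) else 0)"
      by (rule swap3)
    also have "\<dots> = (\<Sum>b1<?d. \<Sum>b2<?d. if b1 \<noteq> b2 then ?O b1 b2 * (\<Sum>r<?d. V $$ (b2, r) * cnj (V $$ (b1, r))) else 0)"
      by (intro sum.cong refl) (simp add: sum_distrib_left)
    also have "\<dots> = 0"
      by (intro sum.neutral ballI) (simp add: unitary_rows[OF uV])
    finally show ?thesis .
  qed
  finally show ?thesis by simp
qed



lemma unitary_ens:
  assumes "k \<in> ens_index n" "\<forall>v<2^n. mub_unitary n P v (U v)"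
  shows "is_unitary n (ens n U k)"
  using assms by (auto simp: ens_index_def ens_def unitary_one unitary_U)

lemma prob_entry:
  assumes W: "W \<in> carrier_mat (2^n) (2^n)" and rho: "\<rho> \<in> carrier_mat (2^n) (2^n)" and x: "x < 2^n"
  shows "(W * \<rho> * adj W) $$ (x, x) = (\<Sum>k<2^n. \<Sum>l<2^n. W $$ (x, k) * \<rho> $$ (k, l) * cnj (W $$ (x, l)))"
proof -
  have "(W * \<rho> * adj W) $$ (x, x) = (\<Sum>l<2^n. (W * \<rho>) $$ (x, l) * adj W $$ (l, x))"
    using W rho x by (simp del: index_mult_mat add: mult_index_sum' index_mult_mat(2,3))
  also have "\<dots> = (\<Sum>l<2^n. \<Sum>k<2^n. W $$ (x, k) * \<rho> $$ (k, l) * cnj (W $$ (x, l)))"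
    using W rho x by (intro sum.cong refl) (simp del: index_mult_mat add: mult_index_sum' sum_distrib_right)
  also have "\<dots> = (\<Sum>k<2^n. \<Sum>l<2^n. W $$ (x, k) * \<rho> $$ (k, l) * cnj (W $$ (x, l)))"
    by (rule sum.swap)
  finally show ?thesis .
qed

lemma prob_nonneg:
  assumes W: "W \<in> carrier_mat (2^n) (2^n)" and dens: "is_density n \<rho>" and x: "x < 2^n"
  shows "0 \<le> Re ((W * \<rho> * adj W) $$ (x, x))"
proof -
  have rho: "\<rho> \<in> carrier_mat (2^n) (2^n)" using dens by (simp add: is_density_def is_hermitian_def)
  define y where "y = vec (2^n) (\<lambda>k. cnj (W $$ (x, k)))"
  have yc: "y \<in> carrier_vec (2^n)" by (simp add: y_def)
  have "cinner y (\<rho> *\<^sub>v y) = (\<Sum>k<2^n. W $$ (x, k) * (\<Sum>l<2^n. \<rho> $$ (k, l) * cnj (W $$ (x, l))))"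
    unfolding cinner_def
  proof (simp add: y_def, intro sum.cong refl)
    fix k :: nat assume k: "k \<in> {..<2^n}"
    have "(\<rho> *\<^sub>v vec (2^n) (\<lambda>k. cnj (W $$ (x, k)))) $ k = (\<Sum>l<2^n. \<rho> $$ (k, l) * cnj (W $$ (x, l)))"
      using rho k by (simp add: scalar_prod_def atLeast0LessThan)
    then show "W $$ (x, k) * (\<rho> *\<^sub>v vec (2^n) (\<lambda>k. cnj (W $$ (x, k)))) $ k =
          W $$ (x, k) * (\<Sum>l<2^n. \<rho> $$ (k, l) * cnj (W $$ (x, l)))" by simp
  qed
  also have "\<dots> = (W * \<rho> * adj W) $$ (x, x)"
    unfolding prob_entry[OF W rho x] by (simp add: sum_distrib_left ac_simps)
  finally have "cinner y (\<rho> *\<^sub>v y) = (W * \<rho> * adj W) $$ (x, x)" .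
  then show ?thesis using dens yc by (metis is_density_def)
qed

lemma prob_sum:
  assumes uW: "is_unitary n W" and dens: "is_density n \<rho>"
  shows "(\<Sum>x<2^n. Re ((W * \<rho> * adj W) $$ (x, x))) = 1"
proof -
  have W: "W \<in> carrier_mat (2^n) (2^n)" using uW by (simp add: is_unitary_def)
  have rho: "\<rho> \<in> carrier_mat (2^n) (2^n)" using dens by (simp add: is_density_def is_hermitian_def)
  have "(\<Sum>x<2^n. (W * \<rho> * adj W) $$ (x, x)) = (\<Sum>x<2^n. \<Sum>k<2^n. \<Sum>l<2^n. W $$ (x, k) * \<rho> $$ (k, l) * cnj (W $$ (x, l)))"
    by (intro sum.cong refl) (simp add: prob_entry[OF W rho])
  also have "\<dots> = (\<Sum>k<2^n. \<Sum>l<2^n. \<Sum>x<2^n. W $$ (x, k) * \<rho> $$ (k, l) * cnj (W $$ (x, l)))"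
    by (rule swap3)
  also have "\<dots> = (\<Sum>k<2^n. \<Sum>l<2^n. \<rho> $$ (k, l) * (\<Sum>x<2^n. cnj (W $$ (x, l)) * W $$ (x, k)))"
    by (simp add: sum_distrib_left ac_simps)
  also have "\<dots> = (\<Sum>k<2^n. \<Sum>l<2^n. if l = k then \<rho> $$ (k, l) else 0)"
    by (intro sum.cong refl) (simp add: unitary_cols[OF uW])
  also have "\<dots> = (\<Sum>k<2^n. \<rho> $$ (k, k))" by simp
  also have "\<dots> = 1" using dens rho by (simp add: is_density_def mtrace_def)
  finally show ?thesis by (metis Re_sum one_complex.simps(1))
qed

lemma S_bound:
  assumes irr: "irreducible P" and dP: "degree P = n"
    and hU: "\<forall>v<2^n. mub_unitary n P v (U v)"
    and k: "k \<in> ens_index n" and k': "k' \<in> ens_index n" and x: "x < 2^n"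
  shows "cmod (\<Sum>b1<2^n. \<Sum>b2<2^n. if b1 \<noteq> b2 then Oel n (ens n U k) Ob b1 b2 *
         (cnj ((ens n U k * adj (ens n U k')) $$ (b1, x)) * (ens n U k * adj (ens n U k')) $$ (b2, x)) else 0)
     \<le> (if k' = k then 0 else C_l1 n (ens n U k) Ob / 2^n)"
proof (cases "k' = k")
  case True
  have uV: "is_unitary n (ens n U k)" using unitary_ens[OF k hU] .
  have G: "(ens n U k * adj (ens n U k)) $$ (b, x) = (if b = x then 1 else 0)" if "b < 2^n" for b
    using uV that x by (simp add: is_unitary_def)
  have "(\<Sum>b1<2^n. \<Sum>b2<2^n. if b1 \<noteq> b2 then Oel n (ens n U k) Ob b1 b2 *
         (cnj ((ens n U k * adj (ens n U k)) $$ (b1, x)) * (ens n U k * adj (ens n U k)) $$ (b2, x)) else 0) = 0"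
    by (intro sum.neutral ballI) (auto simp: G)
  note z = this
  show ?thesis unfolding True by (subst z) simp
next
  case False
  let ?G = "ens n U k * adj (ens n U k')"
  have nG: "cmod (?G $$ (b, x)) = sqrt (1 / 2^n)" if "b < 2^n" for b
    using mub_pairs[OF irr dP hU k k' _ x that] False
    by (metis norm_ge_zero real_sqrt_abs real_sqrt_pow2_iff abs_of_nonneg real_sqrt_power)
  have "cmod (\<Sum>b1<2^n. \<Sum>b2<2^n. if b1 \<noteq> b2 then Oel n (ens n U k) Ob b1 b2 *
         (cnj (?G $$ (b1, x)) * ?G $$ (b2, x)) else 0)
     \<le> (\<Sum>b1<2^n. cmod (\<Sum>b2<2^n. if b1 \<noteq> b2 then Oel n (ens n U k) Ob b1 b2 *
         (cnj (?G $$ (b1, x)) * ?G $$ (b2, x)) else 0))" by (rule norm_sum)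
  also have "\<dots> \<le> (\<Sum>b1<2^n. \<Sum>b2<2^n. cmod (if b1 \<noteq> b2 then Oel n (ens n U k) Ob b1 b2 *
         (cnj (?G $$ (b1, x)) * ?G $$ (b2, x)) else 0))" by (intro sum_mono norm_sum)
  also have "\<dots> = (\<Sum>b1<2^n. \<Sum>b2<2^n. (if b1 \<noteq> b2 then cmod (Oel n (ens n U k) Ob b1 b2) else 0) / 2^n)"
  proof (intro sum.cong refl)
    fix b1 b2 :: nat assume b: "b1 \<in> {..<2^n}" "b2 \<in> {..<2^n}"
    have "cmod (cnj (?G $$ (b1, x)) * ?G $$ (b2, x)) = 1 / 2^n"
      using nG b by (simp add: norm_mult)
    then show "cmod (if b1 \<noteq> b2 then Oel n (ens n U k) Ob b1 b2 * (cnj (?G $$ (b1, x)) * ?G $$ (b2, x)) else 0) =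
        (if b1 \<noteq> b2 then cmod (Oel n (ens n U k) Ob b1 b2) else 0) / 2^n"
      by (simp add: norm_mult)
  qed
  also have "\<dots> = C_l1 n (ens n U k) Ob / 2^n"
    unfolding C_l1_def by (simp add: sum_divide_distrib)
  finally show ?thesis using False by simp
qed



lemma card_ens: "card (ens_index n) = 2^n + 1"
proof -
  have "card (Some ` {..<(2::nat)^n}) = 2^n" by (simp add: card_image)
  moreover have "None \<notin> Some ` {..<(2::nat)^n}" by auto
  ultimately show ?thesis unfolding ens_index_def by simp
qed

theorem theorem2:
  fixes n :: nat and P :: "gf2 poly" and U :: "nat \<Rightarrow> complex mat"
    and k :: "nat option" and Ob \<rho> :: "complex mat"
  assumes "irreducible P" and "degree P = n"
    and "\<forall>v<2 ^ n. mub_unitary n P v (U v)"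
    and "k \<in> ens_index n"
    and "is_hermitian n Ob"
    and "is_density n \<rho>"
  shows "shadow_var n U \<rho> (O_F n (ens n U k) Ob)
           \<le> (2 ^ n + 1) / 2 ^ n * (C_l1 n (ens n U k) Ob)\<^sup>2"
proof -
  note irr = assms(1) and dP = assms(2) and hU = assms(3) and k = assms(4) and dens = assms(6)
  define d :: real where "d = 2^n"
  have d0: "d > 0" unfolding d_def by simp
  define E where "E = ens_index n"
  define F where "F = O_F n (ens n U k) Ob"
  define C where "C = C_l1 n (ens n U k) Ob"
  define B where "B k' = (if k' = k then 0 else (d + 1)^2 * (C / d)^2)" for k'
  define p where "p k' x = shadow_prob n \<rho> (ens n U k') x" for k' x
  define e where "e k' x = estimator n F (ens n U k') x" for k' x
  have C0: "C \<ge> 0" unfolding C_def C_l1_def by (intro sum_nonneg) auto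
  have pnn: "0 \<le> p k' x" if "k' \<in> E" "x < 2^n" for k' x
  proof -
    have "ens n U k' \<in> carrier_mat (2^n) (2^n)" using unitary_ens[OF that(1)[unfolded E_def] hU] by (simp add: is_unitary_def)
    then show ?thesis unfolding p_def shadow_prob_def using prob_nonneg[OF _ dens that(2)] by simp
  qed
  have psum: "(\<Sum>x<2^n. p k' x) = 1 / (d + 1)" if "k' \<in> E" for k'
  proof -
    have "(\<Sum>x<2^n. p k' x) = (1 / (2^n + 1)) * (\<Sum>x<2^n. Re ((ens n U k' * \<rho> * adj (ens n U k')) $$ (x, x)))"
      unfolding p_def shadow_prob_def by (simp add: sum_distrib_left)
    also have "\<dots> = 1 / (d + 1)" using prob_sum[OF unitary_ens[OF that[unfolded E_def] hU] dens] d_def by simp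
    finally show ?thesis .
  qed
  have ebound: "(e k' x)^2 \<le> B k'" if k': "k' \<in> E" and x: "x < 2^n" for k' x
  proof -
    define S where "S = (\<Sum>b1<2^n. \<Sum>b2<2^n. if b1 \<noteq> b2 then Oel n (ens n U k) Ob b1 b2 *
         (cnj ((ens n U k * adj (ens n U k')) $$ (b1, x)) * (ens n U k * adj (ens n U k')) $$ (b2, x)) else 0)"
    have Sb: "cmod S \<le> (if k' = k then 0 else C / d)"
      using S_bound[OF irr dP hU k k'[unfolded E_def] x, of Ob] unfolding S_def C_def d_def by simp
    have tr: "mtrace (F * snapshot n (ens n U k') x) = of_nat (2^n + 1) * S"
      unfolding F_def S_def
      by (rule trace_formula[OF unitary_ens[OF k hU] unitary_ens[OF k'[unfolded E_def] hU] x])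
    have "e k' x = (d + 1) * Re S" unfolding e_def estimator_def tr d_def by simp
    then have "(e k' x)^2 = (d + 1)^2 * (Re S)^2" by (simp add: power_mult_distrib)
    also have "\<dots> \<le> (d + 1)^2 * (cmod S)^2"
      using abs_Re_le_cmod[of S] by (intro mult_left_mono) (auto simp: abs_le_square_iff[symmetric])
    also have "\<dots> \<le> (d + 1)^2 * (if k' = k then 0 else C / d)^2"
      using Sb by (intro mult_left_mono power_mono) auto
    also have "\<dots> = B k'" unfolding B_def by simp
    finally show ?thesis .
  qed
  have step1: "shadow_var n U \<rho> F \<le> (\<Sum>k'\<in>E. \<Sum>x<2^n. p k' x * (e k' x)^2)"
    unfolding shadow_var_def p_def e_def E_def by simp
  also have "\<dots> \<le> (\<Sum>k'\<in>E. \<Sum>x<2^n. p k' x * B k')"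
    using pnn ebound by (intro sum_mono mult_left_mono) auto
  also have "\<dots> = (\<Sum>k'\<in>E. B k' / (d + 1))"
    using psum by (intro sum.cong refl) (simp add: sum_distrib_right[symmetric])
  also have "\<dots> = (\<Sum>k'\<in>E - {k}. (d + 1)^2 * (C / d)^2 / (d + 1))"
  proof -
    have fin: "finite E" unfolding E_def ens_index_def by simp
    have kE: "k \<in> E" using k unfolding E_def .
    show ?thesis using sum.remove[OF fin kE, of "\<lambda>k'. B k' / (d + 1)"] unfolding B_def by simp
  qed
  also have "\<dots> = d * ((d + 1)^2 * (C / d)^2 / (d + 1))"
  proof -
    have "card (E - {k}) = 2^n" using card_ens[of n] k unfolding E_def
      by (simp add: ens_index_def)
    then show ?thesis unfolding d_def by simp
  qed
  also have "\<dots> = (d + 1) / d * C^2"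
  proof -
    have d1: "d + 1 \<noteq> 0" using d0 by simp
    have "(d + 1)^2 * (C / d)^2 / (d + 1) = (d + 1) * (C / d)^2"
      using d1 by (simp add: power2_eq_square)
    moreover have "d * ((d + 1) * (C / d)^2) = (d + 1) / d * C^2"
      using d0 by (simp add: power2_eq_square)
    ultimately show ?thesis by simp
  qed
  also have "\<dots> = (2 ^ n + 1) / 2 ^ n * C^2" unfolding d_def by simp
  finally show ?thesis unfolding F_def C_def .
qed


end
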